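(* Let $X$ be a compact metric space, $r\in\omega$, and $\mathcal C_i\subseteq\mathcal P(X)$ for $i<r$. Let $P^\nu_i$ be the optimal derivation sequence for $\mathcal C_i$, and let $Q^\nu$ be the optimal derivation sequence for $\{\bigcap_{i<r}C_i: C_i\in\mathcal C_i \text{ for each } i<r\}$. Then for all ordinals $(\nu_i)_{i<r}$, $Q^{\#_{i<r}\nu_i}\subseteq\bigcup_{i<r}P_i^{\nu_i}$.
   Context: Optimal derivation sequence: for $\mathcal C\subseteq\mathcal P(X)$, define $P^0=X$, $P^{\nu+1}=P^\nu\setminus\bigcup\{U\subseteq X \text{ open}: P^\nu\cap U\subseteq C\text{ for some }C\in\mathcal C\}$, and $P^\lambda=\bigcap_{\nu<\lambda}P^\nu$ for limit $\lambda$. Natural (Hessenberg) sum: if $\alpha$ and $\beta$ have Cantor normal forms with exponents among $\xi_1>\dots>\xi_r$, $\alpha=\sum_i\omega^{\xi_i}m_i$, $\beta=\sum_i\omega^{\xi_i}n_i$ ($m_i,n_i\in\mathbb N$), then $\alpha\#\beta=\sum_i\omega^{\xi_i}(m_i+n_i)$; $\#_{i<r}\nu_i$ is the iterated natural sum (with value $0$ if $r=0$). *)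

theory Defs
  imports "HOL-Analysis.Analysis" "HOL-Library.Multiset_Order"
begin

definition deriv_step :: "'a::topological_space set \<Rightarrow> 'a set set \<Rightarrow> 'a set \<Rightarrow> 'a set" where
  "deriv_step X \<C> P =
     P - \<Union>{U. openin (top_of_set X) U \<and> (\<exists>C\<in>\<C>. P \<inter> U \<subseteq> C)}"

text \<open>Optimal derivation sequence, indexed by an arbitrary well-ordered type \<open>'o\<close>
(playing the role of an initial segment of the ordinals), defined by transfinite
recursion: value \<open>X\<close> at the least element, a derivation step at successors, and
intersection of all earlier stages at limits.\<close>
definition is_succ_of :: "'o::wellorder \<Rightarrow> 'o \<Rightarrow> bool" where
  "is_succ_of \<nu> \<mu> \<longleftrightarrow> \<mu> < \<nu> \<and> (\<forall>\<eta>. \<eta> < \<nu> \<longrightarrow> \<eta> \<le> \<mu>)"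

definition opt_deriv :: "'a::topological_space set \<Rightarrow> 'a set set \<Rightarrow> 'o::wellorder \<Rightarrow> 'a set" where
  "opt_deriv X \<C> = wfrec {(x, y). x < y}
     (\<lambda>f \<nu>. if \<not> (\<exists>\<mu>. \<mu> < \<nu>) then X
            else if (\<exists>\<mu>. is_succ_of \<nu> \<mu>) then deriv_step X \<C> (f (THE \<mu>. is_succ_of \<nu> \<mu>))
            else (\<Inter>\<mu>\<in>{\<mu>. \<mu> < \<nu>}. f \<mu>))"

text \<open>An ordinal
\<open>\<omega>^\<xi>\<^sub>1 m\<^sub>1 + \<dots> + \<omega>^\<xi>\<^sub>k m\<^sub>k\<close> (\<open>\<xi>\<^sub>1 > \<dots> > \<xi>\<^sub>k\<close>) with exponents taken from a well-ordered
type \<open>'o\<close> is represented by the finite multiset of its exponents, \<open>\<xi>\<^sub>j\<close> having multiplicity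
\<open>m\<^sub>j\<close>.  With the multiset order of HOL-Library.Multiset_Order this type is order-isomorphic
to the ordinals below \<open>\<omega>^otp('o)\<close>; as \<open>'o\<close> ranges over all well-ordered types this covers
all ordinals.\<close>
type_synonym 'o cnf_ordinal = "'o multiset"

text \<open>Natural (Hessenberg) sum: coefficients of equal exponents are added, i.e. the
multisets of exponents are added; the empty natural sum is \<open>0\<close>.\<close>
definition natural_sum :: "nat \<Rightarrow> (nat \<Rightarrow> 'o cnf_ordinal) \<Rightarrow> 'o cnf_ordinal" where
  "natural_sum r \<nu> = (\<Sum>i<r. \<nu> i)"

end

theory Submission
  imports Defs
begin


lemma is_succ_the: "is_succ_of \<nu> \<mu> \<Longrightarrow> (THE \<mu>. is_succ_of \<nu> \<mu>) = \<mu>"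
  by (metis is_succ_of_def antisym_conv2 the_equality not_less)

lemma opt_deriv_eq:
  "opt_deriv X C (\<nu>::'o::wellorder) =
     (if \<not> (\<exists>\<mu>. \<mu> < \<nu>) then X
      else if (\<exists>\<mu>. is_succ_of \<nu> \<mu>) then deriv_step X C (opt_deriv X C (THE \<mu>. is_succ_of \<nu> \<mu>))
      else (\<Inter>\<mu>\<in>{\<mu>. \<mu> < \<nu>}. opt_deriv X C \<mu>))"
proof -
  define F where "F = (\<lambda>f (\<nu>::'o). if \<not> (\<exists>\<mu>. \<mu> < \<nu>) then X
            else if (\<exists>\<mu>. is_succ_of \<nu> \<mu>) then deriv_step X C (f (THE \<mu>. is_succ_of \<nu> \<mu>))
            else (\<Inter>\<mu>\<in>{\<mu>. \<mu> < \<nu>}. f \<mu>))"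
  have d: "opt_deriv X C = wfrec {(x,y). x<y} F" unfolding opt_deriv_def F_def ..
  have e: "opt_deriv X C \<nu> = F (cut (opt_deriv X C) {(x,y). x<y} \<nu>) \<nu>"
    unfolding d by (rule wfrec[OF wf])
  show ?thesis
  proof (cases "\<exists>\<mu>. is_succ_of \<nu> \<mu>")
    case True
    then obtain \<mu> where m: "is_succ_of \<nu> \<mu>" by blast
    have lt: "\<mu> < \<nu>" using m by (simp add: is_succ_of_def)
    show ?thesis unfolding e F_def using lt m is_succ_the[OF m]
      by (auto simp: cut_def)
  next
    case False
    show ?thesis unfolding e F_def using False
      by (auto simp: cut_def)
  qed
qed

lemma opt_deriv_succ: "is_succ_of \<nu> \<mu> \<Longrightarrow> opt_deriv X C \<nu> = deriv_step X C (opt_deriv X C \<mu>)"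
proof -
  assume m: "is_succ_of \<nu> \<mu>"
  have "\<exists>m. m<\<nu>" using m by (auto simp: is_succ_of_def)
  moreover have "\<exists>\<mu>. is_succ_of \<nu> \<mu>" using m by blast
  ultimately have "opt_deriv X C \<nu> = deriv_step X C (opt_deriv X C (THE \<mu>. is_succ_of \<nu> \<mu>))"
    by (subst opt_deriv_eq) simp
  then show ?thesis using is_succ_the[OF m] by simp
qed

lemma deriv_step_sub: "deriv_step X C P \<subseteq> P"
  by (auto simp: deriv_step_def)

lemma opt_deriv_lim: "\<exists>m. m < \<nu> \<Longrightarrow> \<not>(\<exists>\<mu>. is_succ_of \<nu> \<mu>) \<Longrightarrow>
  opt_deriv X C (\<nu>::'o::wellorder) = (\<Inter>\<mu>\<in>{\<mu>. \<mu> < \<nu>}. opt_deriv X C \<mu>)"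
  apply (subst opt_deriv_eq[of X C \<nu>])
  apply (rule trans[OF if_not_P], blast)
  apply (rule trans[OF if_not_P], blast)
  by (rule refl)

lemma opt_deriv_anti_lt: "\<mu> < \<nu> \<Longrightarrow> opt_deriv X C (\<nu>::'o::wellorder) \<subseteq> opt_deriv X C \<mu>"
proof (induction \<nu> arbitrary: \<mu> rule: less_induct)
  case (less \<nu>)
  show ?case
  proof (cases "\<exists>\<mu>'. is_succ_of \<nu> \<mu>'")
    case True
    then obtain \<mu>' where m: "is_succ_of \<nu> \<mu>'" by blast
    have 1: "opt_deriv X C \<nu> \<subseteq> opt_deriv X C \<mu>'"
      unfolding opt_deriv_succ[OF m] by (rule deriv_step_sub)
    have 2: "\<mu> \<le> \<mu>'" using m less.prems unfolding is_succ_of_def by blast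
    have 3: "\<mu>' < \<nu>" using m unfolding is_succ_of_def by blast
    show ?thesis
    proof (cases "\<mu> = \<mu>'")
      case True thus ?thesis using 1 by simp
    next
      case False
      hence "\<mu> < \<mu>'" using 2 by simp
      thus ?thesis using less.IH[OF 3] 1 by blast
    qed
  next
    case False
    have "opt_deriv X C \<nu> = (\<Inter>\<mu>\<in>{\<mu>. \<mu> < \<nu>}. opt_deriv X C \<mu>)"
      using False less.prems opt_deriv_lim by blast
    thus ?thesis using less.prems by blast
  qed
qed

lemma opt_deriv_anti: "\<mu> \<le> \<nu> \<Longrightarrow> opt_deriv X C (\<nu>::'o::wellorder) \<subseteq> opt_deriv X C \<mu>"
proof -
  assume "\<mu> \<le> \<nu>"
  hence "\<mu> = \<nu> \<or> \<mu> < \<nu>" by (rule le_imp_less_or_eq[THEN disjE]) blast+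
  thus ?thesis using opt_deriv_anti_lt[of \<mu> \<nu> X C] by blast
qed

lemma opt_deriv_bot: "\<not> (\<exists>m. m < \<nu>) \<Longrightarrow> opt_deriv X C (\<nu>::'o::wellorder) = X"
  apply (subst opt_deriv_eq[of X C \<nu>])
  by (rule if_P)

lemma opt_deriv_subX: "opt_deriv X C (\<nu>::'o::wellorder) \<subseteq> X"
proof -
  define b where "b = (LEAST x::'o. True)"
  have 1: "\<not> (\<exists>m. m < b)" unfolding b_def using not_less_Least by blast
  have 2: "b \<le> \<nu>" unfolding b_def by (rule Least_le) (rule TrueI)
  show ?thesis using opt_deriv_anti[OF 2, of X C] opt_deriv_bot[OF 1, of X C] by blast
qed

lemma opt_deriv_drop:
  assumes "y \<in> X" "y \<notin> opt_deriv X C (\<nu>::'o::wellorder)"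
  shows "\<exists>\<mu><\<nu>. y \<in> opt_deriv X C \<mu> \<and> y \<notin> deriv_step X C (opt_deriv X C \<mu>)"
proof -
  define \<nu>0 where "\<nu>0 = (LEAST n::'o. y \<notin> opt_deriv X C n)"
  have n0: "y \<notin> opt_deriv X C \<nu>0" unfolding \<nu>0_def by (rule LeastI_ex) (use assms(2) in blast)
  have le: "\<nu>0 \<le> \<nu>" unfolding \<nu>0_def using assms(2) by (simp add: Least_le)
  have min: "y \<in> opt_deriv X C m" if "m < \<nu>0" for m
    using not_less_Least[OF that[unfolded \<nu>0_def]] by auto
  show ?thesis
  proof (cases "\<exists>\<mu>. is_succ_of \<nu>0 \<mu>")
    case True
    then obtain \<mu> where m: "is_succ_of \<nu>0 \<mu>" by blast
    hence lt: "\<mu> < \<nu>0" by (simp add: is_succ_of_def)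
    have "y \<notin> deriv_step X C (opt_deriv X C \<mu>)" using n0 opt_deriv_succ[OF m, of X C] by simp
    thus ?thesis using lt le min[OF lt] by (intro exI[of _ \<mu>]) auto
  next
    case False
    have ex: "\<exists>m. m < \<nu>0"
    proof (rule ccontr)
      assume "\<not> ?thesis"
      thus False using n0 assms(1) opt_deriv_bot by metis
    qed
    have "opt_deriv X C \<nu>0 = (\<Inter>\<mu>\<in>{\<mu>. \<mu> < \<nu>0}. opt_deriv X C \<mu>)"
      using False ex opt_deriv_lim by blast
    thus ?thesis using n0 min by auto
  qed
qed



lemma mset_succ_le:
  fixes M N :: "'o::wellorder multiset"
  assumes "M < N"
  shows "M + {#LEAST x::'o. True#} \<le> N"
proof -
  define b where "b = (LEAST x::'o. True)"
  have bl: "b \<le> x" for x unfolding b_def by (rule Least_le) (rule TrueI)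
  have H: "\<forall>y. count N y < count M y \<longrightarrow> (\<exists>x>y. count M x < count N x)"
    using assms unfolding less_multiset\<^sub>H\<^sub>O by blast
  obtain z where z: "count M z < count N z" using lt_imp_ex_count_lt[OF assms] by blast
  have "\<forall>y. count N y < count (M + {#b#}) y \<longrightarrow> (\<exists>x. y < x \<and> count (M + {#b#}) x < count N x)"
  proof (intro allI impI)
    fix y assume y: "count N y < count (M + {#b#}) y"
    show "\<exists>x. y < x \<and> count (M + {#b#}) x < count N x"
    proof (cases "y = b")
      case True
      hence "count N b \<le> count M b" using y by simp
      hence "z \<noteq> b" using z by auto
      hence "b < z" using bl[of z] by simp
      thus ?thesis using True z \<open>z \<noteq> b\<close> by (intro exI[of _ z]) simp
    next
      case False
      hence "count N y < count M y" using y by simp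
      then obtain x where x: "y < x" "count M x < count N x" using H by blast
      have "x \<noteq> b" using x(1) bl[of y] by auto
      thus ?thesis using x by (intro exI[of _ x]) simp
    qed
  qed
  thus ?thesis unfolding less_eq_multiset\<^sub>H\<^sub>O b_def .
qed

lemma is_succ_mset:
  fixes M :: "'o::wellorder multiset"
  shows "is_succ_of (M + {#LEAST x::'o. True#}) M"
  unfolding is_succ_of_def
proof (intro conjI allI impI)
  show "M < M + {#LEAST x::'o. True#}" by simp
  fix \<eta> assume h: "\<eta> < M + {#LEAST x::'o. True#}"
  show "\<eta> \<le> M"
  proof (rule ccontr)
    assume "\<not> \<eta> \<le> M"
    hence "M < \<eta>" by simp
    from mset_succ_le[OF this] h show False by simp
  qed
qed

lemma sum_add_single:
  "(\<Sum>i<n. f i + {#b#}) = (\<Sum>i<n. f i) + replicate_mset n b"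
  by (induction n) (auto simp: add_ac)

lemma sum_sub_rep:
  assumes "finite A" "\<forall>j\<in>A. g j \<subseteq># {#b#}"
  shows "sum g A \<subseteq># replicate_mset (card A) b"
  using assms
proof (induction A rule: finite_induct)
  case empty thus ?case by simp
next
  case (insert x F)
  have "g x + sum g F \<subseteq># {#b#} + replicate_mset (card F) b"
    using insert by (intro subset_mset.add_mono) auto
  thus ?case using insert by simp
qed



lemma main_claim:
  fixes X :: "'a::topological_space set"
    and r :: nat
    and \<C> :: "nat \<Rightarrow> 'a set set"
    and \<sigma> :: "('o::wellorder) multiset"
  assumes r0: "0 < r"
  shows "\<And>y \<nu>. natural_sum r \<nu> = \<sigma> \<Longrightarrow>
     y \<in> opt_deriv X {X \<inter> (\<Inter>i<r. C i) | C. \<forall>i<r. C i \<in> \<C> i} \<sigma> \<Longrightarrow>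
     \<exists>i<r. y \<in> opt_deriv X (\<C> i) (\<nu> i)"
proof (induction \<sigma> rule: less_induct)
  case (less \<sigma>)
  define F where "F = {X \<inter> (\<Inter>i<r. C i) | C. \<forall>i<r. C i \<in> \<C> i}"
  define b where "b = (LEAST x::'o. True)"
  define P where "P = (\<lambda>i. (opt_deriv X (\<C> i) :: 'o multiset \<Rightarrow> 'a set))"
  define Q where "Q = (opt_deriv X F :: 'o multiset \<Rightarrow> 'a set)"
  fix y \<nu>
  assume ns: "natural_sum r \<nu> = \<sigma>" and yQ: "y \<in> opt_deriv X {X \<inter> (\<Inter>i<r. C i) | C. \<forall>i<r. C i \<in> \<C> i} \<sigma>"
  have yQ': "y \<in> Q \<sigma>" using yQ unfolding Q_def F_def .
  show "\<exists>i<r. y \<in> opt_deriv X (\<C> i) (\<nu> i)"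
  proof (rule ccontr)
    assume "\<not> ?thesis"
    hence no: "\<forall>i<r. y \<notin> P i (\<nu> i)" unfolding P_def by blast
    have yX: "y \<in> X" using yQ' opt_deriv_subX unfolding Q_def by blast
    have "\<forall>i. \<exists>m. i < r \<longrightarrow> m < \<nu> i \<and> y \<in> P i m \<and> y \<notin> deriv_step X (\<C> i) (P i m)"
      using opt_deriv_drop[OF yX] no unfolding P_def by metis
    then obtain \<mu> where mu: "\<And>i. i < r \<Longrightarrow> \<mu> i < \<nu> i \<and> y \<in> P i (\<mu> i) \<and> y \<notin> deriv_step X (\<C> i) (P i (\<mu> i))"
      by metis
    have "\<forall>i. \<exists>UC. i < r \<longrightarrow> openin (top_of_set X) (fst UC) \<and> snd UC \<in> \<C> i \<and> P i (\<mu> i) \<inter> fst UC \<subseteq> snd UC \<and> y \<in> fst UC"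
    proof (intro allI)
      fix i
      show "\<exists>UC. i < r \<longrightarrow> openin (top_of_set X) (fst UC) \<and> snd UC \<in> \<C> i \<and> P i (\<mu> i) \<inter> fst UC \<subseteq> snd UC \<and> y \<in> fst UC"
      proof (cases "i < r")
        case True
        with mu[OF True] obtain U C where "openin (top_of_set X) U" "C \<in> \<C> i" "P i (\<mu> i) \<inter> U \<subseteq> C" "y \<in> U"
          unfolding deriv_step_def by blast
        thus ?thesis by (intro exI[of _ "(U, C)"]) simp
      qed simp
    qed
    then obtain UC where UC: "\<And>i. i < r \<Longrightarrow> openin (top_of_set X) (fst (UC i)) \<and> snd (UC i) \<in> \<C> i \<and> P i (\<mu> i) \<inter> fst (UC i) \<subseteq> snd (UC i) \<and> y \<in> fst (UC i)"
      by metis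
    define U where "U = (\<lambda>i. fst (UC i))"
    define Cf where "Cf = (\<lambda>i. snd (UC i))"
    have U: "\<And>i. i < r \<Longrightarrow> openin (top_of_set X) (U i) \<and> Cf i \<in> \<C> i \<and> P i (\<mu> i) \<inter> U i \<subseteq> Cf i \<and> y \<in> U i"
      using UC unfolding U_def Cf_def by blast
    define \<rho> where "\<rho> = (\<Sum>i<r. \<mu> i) + replicate_mset (r - 1) b"
    have rho_eq: "\<rho> + {#b#} = (\<Sum>i<r. \<mu> i + {#b#})"
      unfolding \<rho>_def sum_add_single using r0 by (cases r) (auto simp: add_ac)
    have "(\<Sum>i<r. \<mu> i + {#b#}) \<le> (\<Sum>i<r. \<nu> i)"
    proof (rule sum_mono)
      fix i assume "i \<in> {..<r}"
      hence "\<mu> i < \<nu> i" using mu by blast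
      thus "\<mu> i + {#b#} \<le> \<nu> i" unfolding b_def by (rule mset_succ_le)
    qed
    hence rho_le: "\<rho> + {#b#} \<le> \<sigma>" using ns rho_eq unfolding natural_sum_def by simp
    have succ: "Q (\<rho> + {#b#}) = deriv_step X F (Q \<rho>)"
      unfolding Q_def b_def by (rule opt_deriv_succ[OF is_succ_mset])
    have "y \<in> Q (\<rho> + {#b#})" using yQ' opt_deriv_anti[OF rho_le] unfolding Q_def by blast
    moreover have "y \<notin> deriv_step X F (Q \<rho>)"
    proof -
      define U0 where "U0 = (\<Inter>i\<in>{..<r}. U i)"
      have op: "openin (top_of_set X) U0" unfolding U0_def
        by (rule openin_INT2) (use r0 U in auto)
      have yU0: "y \<in> U0" unfolding U0_def using U by blast
      have key: "z \<in> P j (\<mu> j)" if z: "z \<in> Q \<rho>" "z \<in> U0" and j: "j < r" for z j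
      proof (rule ccontr)
        assume "z \<notin> P j (\<mu> j)"
        define g where "g = (\<lambda>k. if z \<in> P k (\<mu> k) then {#b#} else ({#}::'o multiset))"
        define \<nu>'' where "\<nu>'' = (\<lambda>k. \<mu> k + g k)"
        have gj: "g j = {#}" using \<open>z \<notin> P j (\<mu> j)\<close> unfolding g_def by simp
        have "sum g {..<r} = g j + sum g ({..<r} - {j})"
          using j by (subst sum.remove[of _ j]) auto
        also have "\<dots> = sum g ({..<r} - {j})" using gj by simp
        also have "\<dots> \<subseteq># replicate_mset (card ({..<r} - {j})) b"
          by (rule sum_sub_rep) (auto simp: g_def)
        also have "card ({..<r} - {j}) = r - 1" using j by simp
        finally have gs: "sum g {..<r} \<subseteq># replicate_mset (r - 1) b" .
        have "natural_sum r \<nu>'' = (\<Sum>i<r. \<mu> i) + sum g {..<r}"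
          unfolding natural_sum_def \<nu>''_def by (simp add: sum.distrib)
        also have "\<dots> \<subseteq># \<rho>" unfolding \<rho>_def using gs by (rule subset_mset.add_left_mono)
        finally have le1: "natural_sum r \<nu>'' \<le> \<rho>" by (rule subset_eq_imp_le_multiset)
        have "\<rho> < \<rho> + {#b#}" by simp
        hence lt: "natural_sum r \<nu>'' < \<sigma>" using le1 rho_le by (meson order_le_less_trans order_less_le_trans)
        have "z \<in> Q (natural_sum r \<nu>'')" using z(1) opt_deriv_anti[OF le1] unfolding Q_def by blast
        then obtain k where k: "k < r" "z \<in> P k (\<nu>'' k)"
          using less.IH[OF lt refl] unfolding Q_def F_def P_def by blast
        show False
        proof (cases "z \<in> P k (\<mu> k)")
          case True
          hence "\<nu>'' k = \<mu> k + {#b#}" unfolding \<nu>''_def g_def by simp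
          hence "P k (\<nu>'' k) = deriv_step X (\<C> k) (P k (\<mu> k))"
            unfolding P_def b_def using opt_deriv_succ[OF is_succ_mset[of "\<mu> k"], of X "\<C> k"] by simp
          moreover have "z \<in> U k" using z(2) k(1) unfolding U0_def by blast
          ultimately show False using U[OF k(1)] k(2) unfolding deriv_step_def by blast
        next
          case False
          hence "\<nu>'' k = \<mu> k" unfolding \<nu>''_def g_def by simp
          thus False using False k(2) by simp
        qed
      qed
      have "Q \<rho> \<inter> U0 \<subseteq> X \<inter> (\<Inter>i<r. Cf i)"
      proof
        fix z assume z: "z \<in> Q \<rho> \<inter> U0"
        have "z \<in> X" using z opt_deriv_subX unfolding Q_def by blast
        moreover have "z \<in> Cf i" if "i < r" for i
          using key[of z i] z U[OF that] that unfolding U0_def by blast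
        ultimately show "z \<in> X \<inter> (\<Inter>i<r. Cf i)" by blast
      qed
      moreover have "X \<inter> (\<Inter>i<r. Cf i) \<in> F" unfolding F_def using U by blast
      ultimately show ?thesis using op yU0 unfolding deriv_step_def by blast
    qed
    ultimately show False using succ by simp
  qed
qed


theorem mainTheorem17:
  fixes X :: "'a::metric_space set"
    and r :: nat
    and \<C> :: "nat \<Rightarrow> 'a set set"
    and \<nu> :: "nat \<Rightarrow> ('o::wellorder) cnf_ordinal"
  assumes "compact X"
    and "0 < r"
    and "\<And>i C. i < r \<Longrightarrow> C \<in> \<C> i \<Longrightarrow> C \<subseteq> X"
  shows "opt_deriv X {X \<inter> (\<Inter>i<r. C i) | C. \<forall>i<r. C i \<in> \<C> i} (natural_sum r \<nu>)
           \<subseteq> (\<Union>i<r. opt_deriv X (\<C> i) (\<nu> i))"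
proof
  fix y assume "y \<in> opt_deriv X {X \<inter> (\<Inter>i<r. C i) | C. \<forall>i<r. C i \<in> \<C> i} (natural_sum r \<nu>)"
  from main_claim[OF assms(2) refl this] show "y \<in> (\<Union>i<r. opt_deriv X (\<C> i) (\<nu> i))" by blast
qed

end
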